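(* Let $n$ be even, $m\ge1$, and $q>4$ an integer. Let $\vec A\in\mathbb Z_2^{m\times n}$ be uniform and $\boldsymbol\theta$ uniform in $\Theta_q^m$, and let $\rho_A$ denote the reduced density matrix of $\ket{\Phi^{\vec A}_{\boldsymbol\theta}}$ on the first $n/2$ qubits. Then $$\mathbb E_{\vec A,\boldsymbol\theta}\big[\mathrm{Tr}(\rho_A^2)\big]\le 2\cdot2^{-n/2}+\Big(\tfrac34\Big)^m,$$ and for every $\vec A$ and $\boldsymbol\theta$, $\mathrm{rank}(\rho_A)\le16^m$, so the entanglement entropy satisfies $S(\rho_A)\le m\log16$.
   Context: $\ket{\Phi^{\vec A}_{\boldsymbol\theta}}=\exp\!\big(\mathrm i\sum_{i=1}^m\theta_i\bigotimes_{j=1}^nZ^{\vec A_{ij}}\big)H^{\otimes n}\ket{0^n}$, $Z^0=I$, $Z^1=Z$; $\Theta_q=\{2\pi k/q:k=0,\dots,q-1\}$. $S(\rho)=-\mathrm{Tr}(\rho\log\rho)$ is the von Neumann entropy. Equivalently, writing $\Lambda$ for the $2^{n/2}\times2^{n/2}$ matrix with entries $\Lambda_{k,l}=\bra{k,l}D\ket{k,l}$ where $D$ is the diagonal unitary above, $\rho_A=2^{-n}\Lambda\Lambda^\dagger$. *)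

theory Defs
  imports "Jordan_Normal_Form.DL_Rank" "Jordan_Normal_Form.Char_Poly"
begin

definition Theta :: "nat \<Rightarrow> real set" where
  "Theta q = {2 * pi * real k / real q | k. k < q}"

(* A in Z_2^{m x n}: entries A i j for i < m, j < n; zero (False) outside *)
definition Amats :: "nat \<Rightarrow> nat \<Rightarrow> (nat \<Rightarrow> nat \<Rightarrow> bool) set" where
  "Amats m n = {A. \<forall>i j. \<not> (i < m \<and> j < n) \<longrightarrow> \<not> A i j}"

definition Thetas :: "nat \<Rightarrow> nat \<Rightarrow> (nat \<Rightarrow> real) set" where
  "Thetas q m = {\<theta>. (\<forall>i<m. \<theta> i \<in> Theta q) \<and> (\<forall>i\<ge>m. \<theta> i = 0)}"

(* value of qubit j (0 <= j < n) of the computational basis state |k,l>,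
   k labelling the first n/2 qubits and l the last n/2 qubits *)
definition qubit :: "nat \<Rightarrow> nat \<Rightarrow> nat \<Rightarrow> nat \<Rightarrow> bool" where
  "qubit n k l j = (if j < n div 2 then odd (k div 2 ^ j) else odd (l div 2 ^ (j - n div 2)))"

(* diagonal entry <k,l| D |k,l> of D = exp(i sum_i theta_i tensor_j Z^{A_ij}) *)
definition Dentry :: "nat \<Rightarrow> nat \<Rightarrow> (nat \<Rightarrow> nat \<Rightarrow> bool) \<Rightarrow> (nat \<Rightarrow> real) \<Rightarrow> nat \<Rightarrow> nat \<Rightarrow> complex" where
  "Dentry m n A \<theta> k l =
     exp (\<i> * complex_of_real (\<Sum>i<m. \<theta> i * (\<Prod>j<n. (if A i j \<and> qubit n k l j then -1 else 1))))"

definition Lambda :: "nat \<Rightarrow> nat \<Rightarrow> (nat \<Rightarrow> nat \<Rightarrow> bool) \<Rightarrow> (nat \<Rightarrow> real) \<Rightarrow> complex mat" where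
  "Lambda m n A \<theta> = mat (2 ^ (n div 2)) (2 ^ (n div 2)) (\<lambda>(k, l). Dentry m n A \<theta> k l)"

definition ctrans :: "complex mat \<Rightarrow> complex mat" where
  "ctrans M = mat (dim_col M) (dim_row M) (\<lambda>(i, j). cnj (M $$ (j, i)))"

definition mtrace :: "complex mat \<Rightarrow> complex" where
  "mtrace M = (\<Sum>i<dim_row M. M $$ (i, i))"

(* reduced density matrix on the first n/2 qubits: rho_A = 2^-n Lambda Lambda^dagger *)
definition rhoA :: "nat \<Rightarrow> nat \<Rightarrow> (nat \<Rightarrow> nat \<Rightarrow> bool) \<Rightarrow> (nat \<Rightarrow> real) \<Rightarrow> complex mat" where
  "rhoA m n A \<theta> = (1 / 2 ^ n :: complex) \<cdot>\<^sub>m (Lambda m n A \<theta> * ctrans (Lambda m n A \<theta>))"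

definition xlogx :: "real \<Rightarrow> real" where
  "xlogx x = (if x \<le> 0 then 0 else x * ln x)"

(* von Neumann entropy -Tr(rho log rho) = - sum over eigenvalues (with algebraic multiplicity)
   of lambda log lambda; eigenvalues of the Hermitian rho are real, Re is taken *)
definition vn_entropy :: "complex mat \<Rightarrow> real" where
  "vn_entropy \<rho> = - (\<Sum>e\<in>{e. eigenvalue \<rho> e}. real (order e (char_poly \<rho>)) * xlogx (Re e))"

end

theory Submission
  imports Defs "Jordan_Normal_Form.Jordan_Normal_Form_Existence" "Jordan_Normal_Form.Jordan_Normal_Form_Uniqueness" "Jordan_Normal_Form.Schur_Decomposition"
begin

definition sK :: "nat \<Rightarrow> (nat \<Rightarrow> bool) \<Rightarrow> nat \<Rightarrow> int" where
  "sK h r k = (\<Prod>j<h. if r j \<and> odd (k div 2^j) then -1 else 1)"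
definition sL :: "nat \<Rightarrow> (nat \<Rightarrow> bool) \<Rightarrow> nat \<Rightarrow> int" where
  "sL h r l = (\<Prod>j<h. if r (j+h) \<and> odd (l div 2^j) then -1 else 1)"
definition phase :: "nat \<Rightarrow> nat \<Rightarrow> (nat \<Rightarrow> nat \<Rightarrow> bool) \<Rightarrow> (nat \<Rightarrow> real) \<Rightarrow> nat \<Rightarrow> nat \<Rightarrow> real" where
  "phase m h A \<theta> k l = (\<Sum>i<m. \<theta> i * real_of_int (sK h (A i) k * sL h (A i) l))"

lemma prod_lessThan_add: "(\<Prod>j<h+(h'::nat). f j) = (\<Prod>j<h. f j) * (\<Prod>j<h'. f (j+h))"
  by (induct h') (auto simp: ac_simps)

lemma Dentry_cis:
  assumes "n = 2*h"
  shows "Dentry m n A \<theta> k l = cis (phase m h A \<theta> k l)"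
proof -
  have "(\<Prod>j<n. (if A i j \<and> qubit n k l j then -1 else 1::real)) = real_of_int (sK h (A i) k * sL h (A i) l)" for i
  proof -
    have "(\<Prod>j<n. (if A i j \<and> qubit n k l j then -1 else 1::real)) =
       (\<Prod>j<h. (if A i j \<and> qubit n k l j then -1 else 1::real)) * (\<Prod>j<h. (if A i (j+h) \<and> qubit n k l (j+h) then -1 else 1::real))"
      using prod_lessThan_add[of "\<lambda>j. (if A i j \<and> qubit n k l j then -1 else 1::real)" h h] assms
      by (simp add: mult_2)
    also have "(\<Prod>j<h. (if A i j \<and> qubit n k l j then -1 else 1::real)) = real_of_int (sK h (A i) k)"
      unfolding sK_def of_int_prod using assms by (intro prod.cong) (auto simp: qubit_def)
    also have "(\<Prod>j<h. (if A i (j+h) \<and> qubit n k l (j+h) then -1 else 1::real)) = real_of_int (sL h (A i) l)"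
      unfolding sL_def of_int_prod using assms by (intro prod.cong) (auto simp: qubit_def)
    finally show ?thesis by simp
  qed
  then show ?thesis unfolding Dentry_def cis_conv_exp phase_def by simp
qed

lemma sK_pm: "sK h r k = 1 \<or> sK h r k = -1"
  unfolding sK_def by (induct h) auto
lemma sL_pm: "sL h r k = 1 \<or> sL h r k = -1"
proof -
  have "\<And>h'. (\<Prod>j<h'. if r (j+h) \<and> odd (k div 2^j) then -1 else 1::int) = 1 \<or> (\<Prod>j<h'. if r (j+h) \<and> odd (k div 2^j) then -1 else 1::int) = -1"
    subgoal for h' by (induct h') auto done
  then show ?thesis unfolding sL_def by blast
qed

lemma Lambda_carrier: "Lambda m n A \<theta> \<in> carrier_mat (2^(n div 2)) (2^(n div 2))"
  unfolding Lambda_def by simp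

lemma rho_carrier: "rhoA m n A \<theta> \<in> carrier_mat (2^(n div 2)) (2^(n div 2))"
  unfolding rhoA_def ctrans_def Lambda_def by (intro carrier_matI) simp_all

lemma rho_entry:
  assumes "k < 2^(n div 2)" "k' < 2^(n div 2)"
  shows "rhoA m n A \<theta> $$ (k,k') = (1/2^n) * (\<Sum>l<2^(n div 2). Dentry m n A \<theta> k l * cnj (Dentry m n A \<theta> k' l))"
  using assms unfolding rhoA_def ctrans_def Lambda_def
  by (simp add: scalar_prod_def atLeast0LessThan)


definition Fset :: "nat \<Rightarrow> 'a set \<Rightarrow> 'a \<Rightarrow> (nat \<Rightarrow> 'a) set" where
  "Fset m S c = {f. (\<forall>i<m. f i \<in> S) \<and> (\<forall>i\<ge>m. f i = c)}"

lemma Fset_Suc: "Fset (Suc m) S c = (\<lambda>(f,x). f(m:=x)) ` (Fset m S c \<times> S)"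
proof (intro equalityI subsetI)
  fix g assume g: "g \<in> Fset (Suc m) S c"
  have "g = (g(m:=c))(m := g m)" by simp
  moreover have "g(m:=c) \<in> Fset m S c" "g m \<in> S" using g by (auto simp: Fset_def)
  ultimately show "g \<in> (\<lambda>(f,x). f(m:=x)) ` (Fset m S c \<times> S)"
    by (intro image_eqI[of _ _ "(g(m:=c), g m)"]) auto
next
  fix g assume "g \<in> (\<lambda>(f,x). f(m:=x)) ` (Fset m S c \<times> S)"
  then show "g \<in> Fset (Suc m) S c" by (auto simp: Fset_def)
qed

lemma Fset_inj: "inj_on (\<lambda>(f,x). f(m:=x)) (Fset m S c \<times> S)"
proof (rule inj_onI, clarify)
  fix f x g y assume A: "f \<in> Fset m S c" "g \<in> Fset m S c" and e: "f(m := x) = g(m := y)"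
  from e have "x = y" by (metis fun_upd_same)
  moreover have "f = g"
  proof
    fix i show "f i = g i"
      using A e[THEN fun_cong, of i] by (cases "i = m") (auto simp: Fset_def)
  qed
  ultimately show "f = g \<and> x = y" by simp
qed

lemma sum_Fset:
  fixes G :: "nat \<Rightarrow> 'a \<Rightarrow> 'b::comm_semiring_1"
  shows "(\<Sum>f\<in>Fset m S c. \<Prod>i<m. G i (f i)) = (\<Prod>i<m. \<Sum>x\<in>S. G i x)"
proof (induct m)
  case 0
  have "Fset 0 S c = {\<lambda>_. c}" by (auto simp: Fset_def fun_eq_iff)
  then show ?case by simp
next
  case (Suc m)
  have "(\<Sum>f\<in>Fset (Suc m) S c. \<Prod>i<Suc m. G i (f i))
      = (\<Sum>p\<in>Fset m S c \<times> S. \<Prod>i<Suc m. G i ((case p of (f,x) \<Rightarrow> f(m:=x)) i))"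
    unfolding Fset_Suc by (subst sum.reindex[OF Fset_inj]) (simp add: case_prod_beta)
  also have "\<dots> = (\<Sum>p\<in>Fset m S c \<times> S. (\<Prod>i<m. G i (fst p i)) * G m (snd p))"
    by (intro sum.cong refl) (auto simp: prod.lessThan_Suc intro!: prod.cong)
  also have "\<dots> = (\<Sum>f\<in>Fset m S c. \<Sum>x\<in>S. (\<Prod>i<m. G i (f i)) * G m x)"
    by (simp add: sum.cartesian_product case_prod_beta)
  also have "\<dots> = (\<Sum>f\<in>Fset m S c. \<Prod>i<m. G i (f i)) * (\<Sum>x\<in>S. G m x)"
    by (simp add: sum_product)
  finally show ?case using Suc by (simp add: prod.lessThan_Suc)
qed

lemma card_Fset: "card (Fset m S c) = card S ^ m"
proof -
  have "(\<Sum>f\<in>Fset m S c. \<Prod>i<m. (\<lambda>i x. 1::nat) i (f i)) = (\<Prod>i<m. \<Sum>x\<in>S. (\<lambda>i x. 1::nat) i x)"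
    by (rule sum_Fset)
  then show ?thesis by simp
qed

lemma finite_Fset: "finite S \<Longrightarrow> finite (Fset m S c)"
proof (induct m)
  case 0
  have "Fset 0 S c = {\<lambda>_. c}" by (auto simp: Fset_def fun_eq_iff)
  then show ?case by simp
next
  case (Suc m) then show ?case unfolding Fset_Suc by auto
qed

definition Rows :: "nat \<Rightarrow> (nat \<Rightarrow> bool) set" where
  "Rows n = Fset n UNIV False"

lemma Amats_Fset: "Amats m n = Fset m (Rows n) (\<lambda>_. False)"
  unfolding Amats_def Rows_def Fset_def by (auto simp: fun_eq_iff) (metis leI)

lemma Thetas_Fset: "Thetas q m = Fset m (Theta q) 0"
  unfolding Thetas_def Fset_def by auto

lemma card_Rows: "card (Rows n) = 2^n"
  unfolding Rows_def by (simp add: card_Fset card_UNIV_bool)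

lemma finite_Rows: "finite (Rows n)"
  unfolding Rows_def by (simp add: finite_Fset)

lemma Theta_image: "Theta q = (\<lambda>k. 2 * pi * real k / real q) ` {..<q}"
  unfolding Theta_def by auto

lemma Theta_inj: "q > 0 \<Longrightarrow> inj_on (\<lambda>k. 2 * pi * real k / real q) {..<q}"
  by (auto simp: inj_on_def)

lemma card_Theta: "q > 0 \<Longrightarrow> card (Theta q) = q"
  unfolding Theta_image by (simp add: card_image Theta_inj)

lemma finite_Theta: "finite (Theta q)"
  unfolding Theta_image by simp

lemma card_Amats: "card (Amats m n) = (2^n)^m"
  unfolding Amats_Fset by (simp add: card_Fset finite_Rows card_Rows)
lemma card_Thetas: "q > 0 \<Longrightarrow> card (Thetas q m) = q^m"
  unfolding Thetas_Fset by (simp add: card_Fset finite_Theta card_Theta)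
lemma finite_Amats: "finite (Amats m n)"
  unfolding Amats_Fset by (simp add: finite_Fset finite_Rows)
lemma finite_Thetas: "finite (Thetas q m)"
  unfolding Thetas_Fset by (simp add: finite_Fset finite_Theta)


lemma cis_2pi_int: "cis (2 * pi * real_of_int z) = 1"
  by (simp add: complex_eq_iff cos_int_2pin sin_int_2pin)

lemma sum_Theta_cis:
  assumes q: "q > 4" and z: "\<bar>z\<bar> \<le> 4"
  shows "(\<Sum>t\<in>Theta q. cis (t * real_of_int z)) = (if z = 0 then of_nat q else 0)"
proof -
  have q0: "q > 0" using q by simp
  define w where "w = cis (2 * pi * real_of_int z / real q)"
  have "(\<Sum>t\<in>Theta q. cis (t * real_of_int z)) = (\<Sum>k<q. cis (2 * pi * real k / real q * real_of_int z))"
    unfolding Theta_image by (subst sum.reindex[OF Theta_inj[OF q0]]) simp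
  also have "\<dots> = (\<Sum>k<q. w ^ k)"
    unfolding w_def DeMoivre by (intro sum.cong refl) (simp add: field_simps)
  finally have eq: "(\<Sum>t\<in>Theta q. cis (t * real_of_int z)) = (\<Sum>k<q. w ^ k)" .
  show ?thesis
  proof (cases "z = 0")
    case True
    then show ?thesis unfolding eq w_def by simp
  next
    case False
    have w1: "w \<noteq> 1"
    proof
      assume "w = 1"
      then have "cos (2 * pi * real_of_int z / real q) = 1" unfolding w_def
        by (metis Re_complex_of_real cis.sel(1) one_complex.sel(1))
      then obtain j :: int where j: "2 * pi * real_of_int z / real q = real_of_int j * 2 * pi"
        by (auto simp: cos_one_2pi_int)
      then have "real_of_int z = real_of_int j * real q" using q0 by (simp add: field_simps)
      then have zj: "z = j * int q" by (metis of_int_eq_iff of_int_mult of_int_of_nat_eq)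
      with False have "j \<noteq> 0" by auto
      then have "\<bar>z\<bar> \<ge> int q" unfolding zj abs_mult by (simp add: mult_le_cancel_right1 del: of_nat_le_iff) linarith
      with z q show False by simp
    qed
    have "w ^ q = 1" unfolding w_def DeMoivre using q0
      by (simp add: cis_2pi_int[of z, symmetric] field_simps)
    then show ?thesis unfolding eq using w1 False by (simp add: geometric_sum)
  qed
qed


lemma exists_diff_bit:
  fixes k k' :: nat
  assumes "k < 2^h" "k' < 2^h" "k \<noteq> k'"
  shows "\<exists>j<h. odd (k div 2^j) \<noteq> odd (k' div 2^j)"
proof -
  from assms(3) obtain j where j: "bit k j \<noteq> bit k' j" using bit_eq_iff by blast
  have "j < h"
  proof (rule ccontr)
    assume "\<not> j < h"
    then have "k div 2^j = 0" "k' div 2^j = 0" using assms(1,2)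
      by (meson div_less le_less_trans not_less power_increasing_iff one_less_numeral_iff semiring_norm(76))+
    then show False using j by (simp add: bit_iff_odd)
  qed
  with j show ?thesis by (auto simp: bit_iff_odd)
qed

definition fl :: "nat \<Rightarrow> (nat \<Rightarrow> bool) \<Rightarrow> (nat \<Rightarrow> bool)" where
  "fl j r = r(j := \<not> r j)"

lemma fl_fl[simp]: "fl j (fl j r) = r" unfolding fl_def by auto
lemma inj_fl: "inj (fl j)" by (metis fl_fl injI)

lemma fl_Rows: "j < n \<Longrightarrow> r \<in> Rows n \<Longrightarrow> fl j r \<in> Rows n"
  unfolding Rows_def Fset_def fl_def by auto

lemma sK_flip:
  assumes "j < h"
  shows "sK h (fl j r) k = (if odd (k div 2^j) then -1 else 1) * sK h r k"
proof -
  have fin: "finite {..<h}" and jin: "j \<in> {..<h}" using assms by auto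
  let ?f = "\<lambda>r i. (if r i \<and> odd (k div 2^i) then -1 else 1::int)"
  have "sK h (fl j r) k = ?f (fl j r) j * (\<Prod>i\<in>{..<h}-{j}. ?f (fl j r) i)"
    unfolding sK_def by (rule prod.remove[OF fin jin])
  also have "(\<Prod>i\<in>{..<h}-{j}. ?f (fl j r) i) = (\<Prod>i\<in>{..<h}-{j}. ?f r i)"
    by (intro prod.cong) (auto simp: fl_def)
  also have "?f (fl j r) j = (if odd (k div 2^j) then -1 else 1) * ?f r j"
    by (auto simp: fl_def)
  also have "sK h r k = ?f r j * (\<Prod>i\<in>{..<h}-{j}. ?f r i)"
    unfolding sK_def by (rule prod.remove[OF fin jin])
  ultimately show ?thesis by simp
qed

lemma sL_flip0:
  assumes "j < h"
  shows "sL h (fl j r) l = sL h r l"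
  unfolding sL_def using assms by (intro prod.cong) (auto simp: fl_def)

lemma sL_flip:
  assumes "j < h"
  shows "sL h (fl (j+h) r) l = (if odd (l div 2^j) then -1 else 1) * sL h r l"
proof -
  have fin: "finite {..<h}" and jin: "j \<in> {..<h}" using assms by auto
  let ?f = "\<lambda>r i. (if r (i+h) \<and> odd (l div 2^i) then -1 else 1::int)"
  have "sL h (fl (j+h) r) l = ?f (fl (j+h) r) j * (\<Prod>i\<in>{..<h}-{j}. ?f (fl (j+h) r) i)"
    unfolding sL_def by (rule prod.remove[OF fin jin])
  also have "(\<Prod>i\<in>{..<h}-{j}. ?f (fl (j+h) r) i) = (\<Prod>i\<in>{..<h}-{j}. ?f r i)"
    by (intro prod.cong) (auto simp: fl_def)
  also have "?f (fl (j+h) r) j = (if odd (l div 2^j) then -1 else 1) * ?f r j"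
    by (auto simp: fl_def)
  also have "sL h r l = ?f r j * (\<Prod>i\<in>{..<h}-{j}. ?f r i)"
    unfolding sL_def by (rule prod.remove[OF fin jin])
  ultimately show ?thesis by simp
qed

lemma sK_flip0:
  assumes "j < h"
  shows "sK h (fl (j+h) r) k = sK h r k"
  unfolding sK_def using assms by (intro prod.cong) (auto simp: fl_def)

lemma pm_toggle:
  fixes x y s s' :: int
  assumes "x = 1 \<or> x = -1" "y = 1 \<or> y = -1" "s = 1 \<or> s = -1" "s' = - s"
  shows "(s * x = s' * y) \<longleftrightarrow> x \<noteq> y"
  using assms by auto

definition Xv :: "nat \<Rightarrow> nat \<Rightarrow> nat \<Rightarrow> nat \<Rightarrow> nat \<Rightarrow> (nat \<Rightarrow> bool) \<Rightarrow> int" where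
  "Xv h k k' l l' r = (sK h r k - sK h r k') * (sL h r l - sL h r l')"

lemma Xv_abs: "\<bar>Xv h k k' l l' r\<bar> \<le> 4"
proof -
  have a: "\<bar>sK h r k - sK h r k'\<bar> \<le> 2" using sK_pm[of h r k] sK_pm[of h r k'] by auto
  have b: "\<bar>sL h r l - sL h r l'\<bar> \<le> 2" using sL_pm[of h r l] sL_pm[of h r l'] by auto
  show ?thesis unfolding Xv_def abs_mult using mult_mono[OF a b] by simp
qed

lemma Xv_zero: "Xv h k k' l l' r = 0 \<longleftrightarrow> sK h r k = sK h r k' \<or> sL h r l = sL h r l'"
  unfolding Xv_def by simp

lemma count_rows:
  assumes n: "n = 2*h" and k: "k < 2^h" "k' < 2^h" "k \<noteq> k'" and l: "l < 2^h" "l' < 2^h" "l \<noteq> l'"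
  shows "4 * card {r\<in>Rows n. Xv h k k' l l' r = 0} \<le> 3 * 2^n"
proof -
  obtain j0 where j0: "j0 < h" "odd (k div 2^j0) \<noteq> odd (k' div 2^j0)" using exists_diff_bit[OF k] by blast
  obtain j1 where j1: "j1 < h" "odd (l div 2^j1) \<noteq> odd (l' div 2^j1)" using exists_diff_bit[OF l] by blast
  define a where "a r = (sK h r k = sK h r k')" for r
  define b where "b r = (sL h r l = sL h r l')" for r
  define C where "C x y = {r\<in>Rows n. a r = x \<and> b r = y}" for x y
  define f0 where "f0 = fl j0"
  define f1 where "f1 = fl (j1+h)"
  have j0n: "j0 < n" and j1n: "j1 + h < n" using j0 j1 n by auto
  have af0: "a (f0 r) = (\<not> a r)" for r
    unfolding a_def f0_def sK_flip[OF j0(1)]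
    by (rule pm_toggle) (insert j0(2) sK_pm[of h r k] sK_pm[of h r k'], auto)
  have bf0: "b (f0 r) = b r" for r unfolding b_def f0_def sL_flip0[OF j0(1)] ..
  have bf1: "b (f1 r) = (\<not> b r)" for r
    unfolding b_def f1_def sL_flip[OF j1(1)]
    by (rule pm_toggle) (insert j1(2) sL_pm[of h r l] sL_pm[of h r l'], auto)
  have af1: "a (f1 r) = a r" for r unfolding a_def f1_def sK_flip0[OF j1(1)] ..
  have R0: "r \<in> Rows n \<Longrightarrow> f0 r \<in> Rows n" for r unfolding f0_def using fl_Rows[OF j0n] .
  have R1: "r \<in> Rows n \<Longrightarrow> f1 r \<in> Rows n" for r unfolding f1_def using fl_Rows[OF j1n] .
  have fin: "finite (C x y)" for x y unfolding C_def using finite_Rows by auto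
  have i0: "inj f0" unfolding f0_def by (rule inj_fl)
  have i1: "inj f1" unfolding f1_def by (rule inj_fl)
  have c1: "card (C True False) \<le> card (C False False)"
  proof -
    have "card (C True False) = card (f0 ` C True False)" by (rule card_image[symmetric], rule inj_on_subset[OF i0]) auto
    also have "\<dots> \<le> card (C False False)" by (intro card_mono fin) (auto simp: C_def af0 bf0 R0)
    finally show ?thesis .
  qed
  have c2: "card (C False True) \<le> card (C False False)"
  proof -
    have "card (C False True) = card (f1 ` C False True)" by (rule card_image[symmetric], rule inj_on_subset[OF i1]) auto
    also have "\<dots> \<le> card (C False False)" by (intro card_mono fin) (auto simp: C_def af1 bf1 R1)
    finally show ?thesis .
  qed
  have c3: "card (C True True) \<le> card (C False False)"
  proof -
    have "card (C True True) = card ((f0 \<circ> f1) ` C True True)" by (rule card_image[symmetric], rule inj_on_subset[OF inj_compose[OF i0 i1]]) auto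
    also have "\<dots> \<le> card (C False False)" by (intro card_mono fin) (auto simp: C_def af1 bf1 R1 af0 bf0 R0)
    finally show ?thesis .
  qed
  have sub: "{r\<in>Rows n. Xv h k k' l l' r = 0} \<subseteq> C True True \<union> C True False \<union> C False True"
    unfolding Xv_zero C_def a_def b_def by auto
  have "card {r\<in>Rows n. Xv h k k' l l' r = 0} \<le> card (C True True \<union> C True False \<union> C False True)"
    by (intro card_mono sub) (simp add: fin)
  also have "\<dots> \<le> card (C True True) + card (C True False) + card (C False True)"
    by (meson add_le_mono card_Un_le order_trans order_refl)
  finally have N3: "card {r\<in>Rows n. Xv h k k' l l' r = 0} \<le> 3 * card (C False False)" using c1 c2 c3 by linarith
  have "Rows n = {r\<in>Rows n. Xv h k k' l l' r = 0} \<union> C False False"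
    unfolding Xv_zero C_def a_def b_def by auto
  moreover have "{r\<in>Rows n. Xv h k k' l l' r = 0} \<inter> C False False = {}"
    unfolding Xv_zero C_def a_def b_def by auto
  ultimately have "card (Rows n) = card {r\<in>Rows n. Xv h k k' l l' r = 0} + card (C False False)"
    by (metis card_Un_disjoint fin finite_Rows finite_Un)
  then show ?thesis using N3 card_Rows[of n] by linarith
qed


lemma cis_sum: "cis (\<Sum>i\<in>I. f i) = (\<Prod>i\<in>I. cis (f i))"
  by (induct I rule: infinite_finite_induct) (auto simp flip: cis_mult)

lemma swap5: "(\<Sum>p\<in>P. \<Sum>k\<in>K. \<Sum>k'\<in>K. \<Sum>l\<in>L. \<Sum>l'\<in>L. f p k k' l l') = (\<Sum>k\<in>K. \<Sum>k'\<in>K. \<Sum>l\<in>L. \<Sum>l'\<in>L. \<Sum>p\<in>P. f p k k' l l')"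
  apply (subst sum.swap[where A=P])
  apply (rule sum.cong[OF refl])
  apply (subst sum.swap[where A=P])
  apply (rule sum.cong[OF refl])
  apply (subst sum.swap[where A=P])
  apply (rule sum.cong[OF refl])
  apply (subst sum.swap[where A=P])
  apply (rule refl)
  done

definition Tt :: "nat \<Rightarrow> nat \<Rightarrow> (nat \<Rightarrow> nat \<Rightarrow> bool) \<Rightarrow> (nat \<Rightarrow> real) \<Rightarrow> nat \<Rightarrow> nat \<Rightarrow> nat \<Rightarrow> nat \<Rightarrow> complex" where
  "Tt m n A \<theta> k k' l l' = Dentry m n A \<theta> k l * cnj (Dentry m n A \<theta> k' l) * (Dentry m n A \<theta> k' l' * cnj (Dentry m n A \<theta> k l'))"

lemma trace_rho2:
  fixes n :: nat
  defines "d \<equiv> 2^(n div 2)"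
  shows "mtrace (rhoA m n A \<theta> * rhoA m n A \<theta>) = (1/2^n)^2 *
    (\<Sum>k<d. \<Sum>k'<d. \<Sum>l<d. \<Sum>l'<d. Tt m n A \<theta> k k' l l')"
proof -
  let ?r = "rhoA m n A \<theta>"
  have C: "?r \<in> carrier_mat d d" unfolding d_def by (rule rho_carrier)
  have "mtrace (?r * ?r) = (\<Sum>k<d. (?r * ?r) $$ (k,k))" unfolding mtrace_def using C by simp
  also have "\<dots> = (\<Sum>k<d. \<Sum>k'<d. ?r $$ (k,k') * ?r $$ (k',k))"
    using C by (intro sum.cong refl) (simp add: scalar_prod_def atLeast0LessThan)
  also have "\<dots> = (\<Sum>k<d. \<Sum>k'<d. (1/2^n)^2 * (\<Sum>l<d. \<Sum>l'<d. Tt m n A \<theta> k k' l l'))"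
    by (intro sum.cong refl) (simp add: rho_entry d_def Tt_def sum_product power2_eq_square)
  also have "\<dots> = (1/2^n)^2 * (\<Sum>k<d. \<Sum>k'<d. \<Sum>l<d. \<Sum>l'<d. Tt m n A \<theta> k k' l l')"
    by (simp add: sum_distrib_left)
  finally show ?thesis .
qed

lemma Tt_prod:
  assumes n: "n = 2*h"
  shows "Tt m n A \<theta> k k' l l' = (\<Prod>i<m. cis (\<theta> i * real_of_int (Xv h k k' l l' (A i))))"
proof -
  have "Tt m n A \<theta> k k' l l' = cis (phase m h A \<theta> k l - phase m h A \<theta> k' l + (phase m h A \<theta> k' l' - phase m h A \<theta> k l'))"
    unfolding Tt_def Dentry_cis[OF n] by (simp add: cis_cnj cis_mult)
  also have "phase m h A \<theta> k l - phase m h A \<theta> k' l + (phase m h A \<theta> k' l' - phase m h A \<theta> k l') = (\<Sum>i<m. \<theta> i * real_of_int (Xv h k k' l l' (A i)))"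
    unfolding phase_def Xv_def by (simp add: sum_subtractf[symmetric] sum.distrib[symmetric] algebra_simps)
  finally show ?thesis by (simp add: cis_sum)
qed

lemma sum_Tt:
  assumes n: "n = 2*h" and q: "q > 4"
  shows "(\<Sum>A\<in>Amats m n. \<Sum>\<theta>\<in>Thetas q m. Tt m n A \<theta> k k' l l') = of_nat ((q * card {r\<in>Rows n. Xv h k k' l l' r = 0})^m)"
proof -
  let ?X = "Xv h k k' l l'"
  have "(\<Sum>A\<in>Amats m n. \<Sum>\<theta>\<in>Thetas q m. Tt m n A \<theta> k k' l l') =
        (\<Sum>A\<in>Amats m n. \<Prod>i<m. (\<lambda>r. if ?X r = 0 then of_nat q else 0) (A i))"
  proof (intro sum.cong refl)
    fix A
    have "(\<Sum>\<theta>\<in>Thetas q m. Tt m n A \<theta> k k' l l') = (\<Sum>\<theta>\<in>Fset m (Theta q) 0. \<Prod>i<m. (\<lambda>i t. cis (t * real_of_int (?X (A i)))) i (\<theta> i))"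
      unfolding Thetas_Fset Tt_prod[OF n] by simp
    also have "\<dots> = (\<Prod>i<m. \<Sum>t\<in>Theta q. cis (t * real_of_int (?X (A i))))"
      by (rule sum_Fset)
    also have "\<dots> = (\<Prod>i<m. (\<lambda>r. if ?X r = 0 then of_nat q else 0) (A i))"
      using sum_Theta_cis[OF q Xv_abs] by simp
    finally show "(\<Sum>\<theta>\<in>Thetas q m. Tt m n A \<theta> k k' l l') = (\<Prod>i<m. (\<lambda>r. if ?X r = 0 then of_nat q else 0) (A i))" .
  qed
  also have "\<dots> = (\<Prod>i<m. \<Sum>r\<in>Rows n. (\<lambda>i r. if ?X r = 0 then of_nat q else (0::complex)) i r)"
    unfolding Amats_Fset by (rule sum_Fset)
  also have "(\<Sum>r\<in>Rows n. if ?X r = 0 then of_nat q else (0::complex)) = of_nat (q * card {r\<in>Rows n. ?X r = 0})"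
    by (simp add: sum.If_cases finite_Rows Int_def conj_commute)
  finally show ?thesis by simp
qed


lemma final_bound:
  fixes N :: "nat \<Rightarrow> nat \<Rightarrow> nat \<Rightarrow> nat \<Rightarrow> nat" and h m :: nat
  assumes N1: "\<And>k k' l l'. N k k' l l' \<le> 2^(2*h)"
    and N2: "\<And>k k' l l'. k < 2^h \<Longrightarrow> k' < 2^h \<Longrightarrow> l < 2^h \<Longrightarrow> l' < 2^h \<Longrightarrow> k \<noteq> k' \<Longrightarrow> l \<noteq> l' \<Longrightarrow> 4 * N k k' l l' \<le> 3 * 2^(2*h)"
  shows "(1/2^(2*h))^2 * (\<Sum>k<2^h. \<Sum>k'<2^h. \<Sum>l<2^h. \<Sum>l'<2^h. (real (N k k' l l') / 2^(2*h))^m)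
     \<le> 2 * 2 powr (- real (2*h) / 2) + (3/4)^m"
proof -
  define d :: nat where "d = 2^h"
  have dpos: "d > 0" unfolding d_def by simp
  have n2: "(2::real)^(2*h) = real d * real d" unfolding d_def
    by (simp only: mult.commute[of 2 h] power_mult power2_eq_square of_nat_mult of_nat_power of_nat_numeral)
  have tm: "(real (N k k' l l') / 2^(2*h))^m \<le> (if k = k' then 1 else 0) + (if l = l' then 1 else 0) + (3/4)^m"
    if "k < d" "k' < d" "l < d" "l' < d" for k k' l l'
  proof (cases "k = k' \<or> l = l'")
    case True
    have "real (N k k' l l') / 2^(2*h) \<le> 1" using N1[of k k' l l'] by (simp add: divide_le_eq_1)
    then have "(real (N k k' l l') / 2^(2*h))^m \<le> 1" by (simp add: power_le_one)
    moreover have "(0::real) \<le> (3/4)^m" by simp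
    moreover have "1 \<le> (if k = k' then 1 else 0) + (if l = l' then 1 else (0::real))" using True by auto
    ultimately show ?thesis by linarith
  next
    case False
    have "4 * real (N k k' l l') \<le> 3 * 2^(2*h)" using N2[of k k' l l'] that False unfolding d_def
      by (metis (mono_tags, lifting) of_nat_le_iff of_nat_mult of_nat_numeral of_nat_power)
    then have "real (N k k' l l') / 2^(2*h) \<le> 3/4" by (simp add: field_simps)
    then have "(real (N k k' l l') / 2^(2*h))^m \<le> (3/4)^m" by (intro power_mono) auto
    then show ?thesis using False by auto
  qed
  have "(\<Sum>k<d. \<Sum>k'<d. \<Sum>l<d. \<Sum>l'<d. (real (N k k' l l') / 2^(2*h))^m)
     \<le> (\<Sum>k<d. \<Sum>k'<d. \<Sum>l<d. \<Sum>l'<d. (if k = k' then 1 else 0) + (if l = l' then 1 else 0) + ((3/4)^m::real))"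
    by (intro sum_mono tm) auto
  also have "\<dots> = (\<Sum>k<d. \<Sum>k'<d. \<Sum>l<d. \<Sum>l'<d. (if k = k' then 1 else 0::real)) + (\<Sum>k<d. \<Sum>k'<d. \<Sum>l<d. \<Sum>l'<d. (if l = l' then 1 else 0::real))
     + (\<Sum>k<d. \<Sum>k'<d. \<Sum>l<d. \<Sum>l'<d. ((3/4)^m::real))"
    by (simp only: sum.distrib)
  also have "(\<Sum>k<d. \<Sum>k'<d. \<Sum>l<d. \<Sum>l'<d. (if k = k' then 1 else 0::real)) = real d ^ 3"
  proof -
    have "(\<Sum>k<d. \<Sum>k'<d. \<Sum>l<d. \<Sum>l'<d. (if k = k' then 1 else 0::real)) = (\<Sum>k<d. \<Sum>k'<d. (if k = k' then real d * real d else 0))"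
      by (intro sum.cong refl) simp
    also have "\<dots> = (\<Sum>k<d. real d * real d)" by (intro sum.cong refl) (simp add: sum.delta)
    finally show ?thesis by (simp add: power3_eq_cube)
  qed
  also have "(\<Sum>k<d. \<Sum>k'<d. \<Sum>l<d. \<Sum>l'<d. (if l = l' then 1 else 0::real)) = real d ^ 3"
  proof -
    have "(\<Sum>k<d. \<Sum>k'<d. \<Sum>l<d. \<Sum>l'<d. (if l = l' then 1 else 0::real)) = (\<Sum>k<d. \<Sum>k'<d. \<Sum>l<d. 1)"
      by (intro sum.cong refl) (simp add: sum.delta)
    then show ?thesis by (simp add: power3_eq_cube)
  qed
  also have "(\<Sum>k<d. \<Sum>k'<d. \<Sum>l<d. \<Sum>l'<d. ((3/4)^m::real)) = real d ^ 4 * (3/4)^m"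
    by (simp add: power4_eq_xxxx)
  finally have S0: "(\<Sum>k<d. \<Sum>k'<d. \<Sum>l<d. \<Sum>l'<d. (real (N k k' l l') / 2^(2*h))^m) \<le> real d ^ 3 + real d ^ 3 + real d ^ 4 * (3/4)^m" .
  then have S: "(\<Sum>k<d. \<Sum>k'<d. \<Sum>l<d. \<Sum>l'<d. (real (N k k' l l') / 2^(2*h))^m) \<le> 2 * real d ^ 3 + real d ^ 4 * (3/4)^m" by simp
  have p: "2 powr (- real (2*h) / 2) = 1 / real d"
  proof -
    have "- real (2*h) / 2 = - real h" by simp
    then show ?thesis unfolding d_def by (simp add: powr_minus powr_realpow inverse_eq_divide)
  qed
  have "(1/2^(2*h))^2 * (\<Sum>k<d. \<Sum>k'<d. \<Sum>l<d. \<Sum>l'<d. (real (N k k' l l') / 2^(2*h))^m)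
      \<le> (1/(real d * real d))^2 * (2 * real d ^ 3 + real d ^ 4 * (3/4)^m)"
    using S unfolding n2 by (intro mult_left_mono) simp_all
  also have "\<dots> = 2 * (1 / real d) + (3/4)^m" using dpos
    by (simp add: field_simps power2_eq_square power3_eq_cube power4_eq_xxxx)
  finally show ?thesis unfolding p d_def .
qed


lemma sum_prod_pair: "(\<Sum>p\<in>A\<times>B. f (fst p) (snd p)) = (\<Sum>a\<in>A. \<Sum>b\<in>B. f a b)"
  by (simp add: sum.cartesian_product case_prod_beta)

lemma part1:
  fixes n m q :: nat
  assumes "even n" and q: "q > 4"
  shows "(\<Sum>A\<in>Amats m n. \<Sum>\<theta>\<in>Thetas q m. Re (mtrace (rhoA m n A \<theta> * rhoA m n A \<theta>)))
           / (real (card (Amats m n)) * real (card (Thetas q m)))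
         \<le> 2 * 2 powr (- real n / 2) + (3 / 4) ^ m"
proof -
  define h where "h = n div 2"
  have n: "n = 2*h" unfolding h_def using assms(1) by simp
  define d :: nat where "d = 2^h"
  have dd: "2^(n div 2) = d" unfolding d_def h_def ..
  define N where "N k k' l l' = card {r\<in>Rows n. Xv h k k' l l' r = 0}" for k k' l l'
  let ?AT = "Amats m n \<times> Thetas q m"
  have "(\<Sum>A\<in>Amats m n. \<Sum>\<theta>\<in>Thetas q m. mtrace (rhoA m n A \<theta> * rhoA m n A \<theta>))
     = (\<Sum>A\<in>Amats m n. \<Sum>\<theta>\<in>Thetas q m. (1/2^n)^2 * (\<Sum>k<d. \<Sum>k'<d. \<Sum>l<d. \<Sum>l'<d. Tt m n A \<theta> k k' l l'))"
    unfolding trace_rho2 dd ..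
  also have "\<dots> = (1/2^n)^2 * (\<Sum>p\<in>?AT. \<Sum>k<d. \<Sum>k'<d. \<Sum>l<d. \<Sum>l'<d. Tt m n (fst p) (snd p) k k' l l')"
    by (subst sum_prod_pair[where f = "\<lambda>A \<theta>. \<Sum>k<d. \<Sum>k'<d. \<Sum>l<d. \<Sum>l'<d. Tt m n A \<theta> k k' l l'"]) (simp add: sum_distrib_left)
  also have "(\<Sum>p\<in>?AT. \<Sum>k<d. \<Sum>k'<d. \<Sum>l<d. \<Sum>l'<d. Tt m n (fst p) (snd p) k k' l l')
      = (\<Sum>k<d. \<Sum>k'<d. \<Sum>l<d. \<Sum>l'<d. \<Sum>p\<in>?AT. Tt m n (fst p) (snd p) k k' l l')"
    by (rule swap5)
  also have "\<dots> = (\<Sum>k<d. \<Sum>k'<d. \<Sum>l<d. \<Sum>l'<d. of_nat ((q * N k k' l l')^m))"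
  proof (intro sum.cong refl)
    fix k k' l l'
    have "(\<Sum>p\<in>?AT. Tt m n (fst p) (snd p) k k' l l') = (\<Sum>A\<in>Amats m n. \<Sum>\<theta>\<in>Thetas q m. Tt m n A \<theta> k k' l l')"
      by (rule sum_prod_pair)
    also have "\<dots> = of_nat ((q * N k k' l l')^m)" unfolding N_def by (rule sum_Tt[OF n q])
    finally show "(\<Sum>p\<in>?AT. Tt m n (fst p) (snd p) k k' l l') = of_nat ((q * N k k' l l')^m)" .
  qed
  finally have tot: "(\<Sum>A\<in>Amats m n. \<Sum>\<theta>\<in>Thetas q m. mtrace (rhoA m n A \<theta> * rhoA m n A \<theta>))
     = (1/2^n)^2 * (\<Sum>k<d. \<Sum>k'<d. \<Sum>l<d. \<Sum>l'<d. of_nat ((q * N k k' l l')^m))" .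
  have "(\<Sum>A\<in>Amats m n. \<Sum>\<theta>\<in>Thetas q m. Re (mtrace (rhoA m n A \<theta> * rhoA m n A \<theta>)))
     = Re (\<Sum>A\<in>Amats m n. \<Sum>\<theta>\<in>Thetas q m. mtrace (rhoA m n A \<theta> * rhoA m n A \<theta>))"
    by (simp add: Re_sum)
  also have "\<dots> = (1/2^n)^2 * (\<Sum>k<d. \<Sum>k'<d. \<Sum>l<d. \<Sum>l'<d. real ((q * N k k' l l')^m))"
    unfolding tot by (simp add: Re_sum)
  finally have tot2: "(\<Sum>A\<in>Amats m n. \<Sum>\<theta>\<in>Thetas q m. Re (mtrace (rhoA m n A \<theta> * rhoA m n A \<theta>)))
     = (1/2^n)^2 * (\<Sum>k<d. \<Sum>k'<d. \<Sum>l<d. \<Sum>l'<d. real ((q * N k k' l l')^m))" .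
  have cards: "real (card (Amats m n)) * real (card (Thetas q m)) = (2^n)^m * real q ^ m"
    using q by (simp add: card_Amats card_Thetas)
  have qpos: "real q > 0" using q by simp
  have "(\<Sum>A\<in>Amats m n. \<Sum>\<theta>\<in>Thetas q m. Re (mtrace (rhoA m n A \<theta> * rhoA m n A \<theta>)))
           / (real (card (Amats m n)) * real (card (Thetas q m)))
      = (1/2^n)^2 * (\<Sum>k<d. \<Sum>k'<d. \<Sum>l<d. \<Sum>l'<d. real ((q * N k k' l l')^m) / ((2^n)^m * real q ^ m))"
    unfolding tot2 cards by (simp add: sum_divide_distrib[symmetric])
  also have "\<dots> = (1/2^n)^2 * (\<Sum>k<d. \<Sum>k'<d. \<Sum>l<d. \<Sum>l'<d. (real (N k k' l l') / 2^n)^m)"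
    using qpos by (simp add: power_divide power_mult_distrib)
  also have "\<dots> \<le> 2 * 2 powr (- real n / 2) + (3 / 4) ^ m"
    unfolding n d_def
  proof (rule final_bound)
    fix k k' l l'
    have "card {r\<in>Rows n. Xv h k k' l l' r = 0} \<le> card (Rows n)" by (rule card_mono[OF finite_Rows]) auto
    then show "N k k' l l' \<le> 2^(2*h)" unfolding N_def using card_Rows[of n] n by simp
  next
    fix k k' l l' :: nat
    assume "k < 2^h" "k' < 2^h" "l < 2^h" "l' < 2^h" "k \<noteq> k'" "l \<noteq> l'"
    then show "4 * N k k' l l' \<le> 3 * 2^(2*h)" unfolding N_def using count_rows[OF n] n by simp
  qed
  finally show ?thesis .
qed


lemma (in vec_space) rank_le_card_cols:
  assumes "A \<in> carrier_mat n nc"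
  shows "rank A \<le> card (set (cols A))"
proof -
  obtain S where S: "maximal S (\<lambda>T. T \<subseteq> set (cols A) \<and> lin_indpt T)"
    using maximal_exists[of "(\<lambda>T. T \<subseteq> set (cols A) \<and> lin_indpt T)" "card (set (cols A))" "{}"]
    by (meson List.finite_set card_mono empty_iff empty_subsetI finite_lin_indpt2 rev_finite_subset)
  then have "card S \<le> card (set (cols A))" by (simp add: card_mono maximal_def)
  then show ?thesis using rank_card_indpt[OF assms S] by simp
qed

lemma card_image_factor:
  assumes fin: "finite K" and "\<And>x y. x \<in> K \<Longrightarrow> y \<in> K \<Longrightarrow> g x = g y \<Longrightarrow> f x = f y"
  shows "card (f ` K) \<le> card (g ` K)"
proof -
  have "f ` K = (\<lambda>v. f (inv_into K g v)) ` (g ` K)"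
  proof (intro equalityI subsetI)
    fix y assume "y \<in> f ` K"
    then obtain x where x: "x \<in> K" "y = f x" by auto
    have "inv_into K g (g x) \<in> K" "g (inv_into K g (g x)) = g x" using x by (auto intro: inv_into_into f_inv_into_f)
    then have "f (inv_into K g (g x)) = f x" using assms x by blast
    then show "y \<in> (\<lambda>v. f (inv_into K g v)) ` (g ` K)" using x by force
  next
    fix y assume "y \<in> (\<lambda>v. f (inv_into K g v)) ` (g ` K)"
    then obtain x where x: "x \<in> K" "y = f (inv_into K g (g x))" by auto
    then show "y \<in> f ` K" by (auto intro: inv_into_into)
  qed
  then show ?thesis using fin by (simp add: card_image_le)
qed

lemma rank_le_factor:
  fixes M :: "'a::field mat"
  assumes M: "M \<in> carrier_mat d d"
    and g: "\<And>k1 k2. k1 < d \<Longrightarrow> k2 < d \<Longrightarrow> g k1 = g k2 \<Longrightarrow> col M k1 = col M k2"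
  shows "vec_space.rank d M \<le> card (g ` {..<d})"
proof -
  have "vec_space.rank d M \<le> card (set (cols M))" by (rule vec_space.rank_le_card_cols[OF M])
  also have "set (cols M) = col M ` {..<d}" using M by (simp add: cols_def atLeast0LessThan)
  also have "card \<dots> \<le> card (g ` {..<d})" by (rule card_image_factor[OF finite_lessThan]) (rule g; simp)
  finally show ?thesis .
qed

lemma mult_unit_vec:
  fixes M :: "'a::field mat"
  assumes M: "M \<in> carrier_mat d d" and j: "j < d"
  shows "M *\<^sub>v unit_vec d j = col M j"
  using M j by (intro eq_vecI) (auto simp: col_def)


lemma kernel_dim_ge:
  fixes M :: "'a::field mat"
  assumes M: "M \<in> carrier_mat d d"
    and g: "\<And>k1 k2. k1 < d \<Longrightarrow> k2 < d \<Longrightarrow> g k1 = g k2 \<Longrightarrow> col M k1 = col M k2"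
  shows "d - card (g ` {..<d}) \<le> kernel_dim M"
proof -
  define rep where "rep v = inv_into {..<d} g v" for v
  have rep: "rep (g k) < d" "g (rep (g k)) = g k" if "k < d" for k
  proof -
    have gk: "g k \<in> g ` {..<d}" using that by auto
    show "rep (g k) < d" unfolding rep_def using inv_into_into[OF gk] by simp
    show "g (rep (g k)) = g k" unfolding rep_def using f_inv_into_f[OF gk] .
  qed
  define Nr where "Nr = {k. k < d \<and> rep (g k) \<noteq> k}"
  define R where "R = {k. k < d \<and> rep (g k) = k}"
  have R_sub: "R \<subseteq> rep ` (g ` {..<d})"
  proof
    fix k assume "k \<in> R"
    then have "k < d" "rep (g k) = k" unfolding R_def by auto
    then show "k \<in> rep ` g ` {..<d}" by (metis imageI lessThan_iff)
  qed
  have cardR: "card R \<le> card (g ` {..<d})"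
    using card_mono[OF _ R_sub] card_image_le[of "g ` {..<d}" rep] by auto
  have U: "{..<d} = R \<union> Nr" unfolding R_def Nr_def by auto
  have "card (R \<union> Nr) = card R + card Nr" by (rule card_Un_disjoint) (auto simp: R_def Nr_def)
  then have cardRN: "d = card R + card Nr" using U by (metis card_lessThan)
  define w where "w k = (unit_vec d k - unit_vec d (rep (g k)) :: 'a vec)" for k
  have repNr: "rep (g k) \<notin> Nr" if "k < d" for k
    using rep[OF that] unfolding Nr_def by auto
  have wk: "w k $ k' = (if k' = k then 1 else 0)" if "k \<in> Nr" "k' \<in> Nr" for k k'
  proof -
    have kd: "k < d" "k' < d" using that unfolding Nr_def by auto
    have "k' \<noteq> rep (g k)" using repNr[OF kd(1)] that(2) by auto
    then show ?thesis unfolding w_def using kd rep[OF kd(1)] by auto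
  qed
  have wcar: "w k \<in> carrier_vec d" for k unfolding w_def by simp
  have wker: "w k \<in> mat_kernel M" if "k \<in> Nr" for k
  proof -
    have kd: "k < d" using that unfolding Nr_def by auto
    have "M *\<^sub>v w k = M *\<^sub>v unit_vec d k - M *\<^sub>v unit_vec d (rep (g k))"
      unfolding w_def by (rule mult_minus_distrib_mat_vec[OF M]) auto
    also have "\<dots> = col M k - col M (rep (g k))"
      using mult_unit_vec[OF M kd] mult_unit_vec[OF M rep(1)[OF kd]] by simp
    also have "col M (rep (g k)) = col M k" using g[OF rep(1)[OF kd] kd rep(2)[OF kd]] .
    finally have "M *\<^sub>v w k = 0\<^sub>v d" using M by auto
    then show ?thesis by (intro mat_kernelI[OF M wcar])
  qed
  have injw: "inj_on w Nr"
  proof (rule inj_onI)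
    fix k k' assume "k \<in> Nr" "k' \<in> Nr" "w k = w k'"
    then have "w k $ k = w k' $ k" by simp
    then show "k = k'" using wk[OF \<open>k \<in> Nr\<close> \<open>k \<in> Nr\<close>] wk[OF \<open>k' \<in> Nr\<close> \<open>k \<in> Nr\<close>] by (auto split: if_splits)
  qed
  interpret K: kernel d d M by unfold_locales (rule M)
  have Wsub: "w ` Nr \<subseteq> mat_kernel M" using wker by auto
  have finNr: "finite Nr" unfolding Nr_def by auto
  have li: "\<not> K.NC.lin_dep (w ` Nr)"
  proof (rule K.NC.finite_lin_indpt2)
    show "finite (w ` Nr)" using finNr by simp
    show "w ` Nr \<subseteq> carrier_vec d" using wcar by auto
    fix a assume lc: "K.NC.lincomb a (w ` Nr) = 0\<^sub>v d"
    show "\<forall>v\<in>w ` Nr. a v = 0"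
    proof
      fix v assume "v \<in> w ` Nr"
      then obtain k where k: "k \<in> Nr" "v = w k" by auto
      have kd: "k < d" using k unfolding Nr_def by auto
      have "K.NC.lincomb a (w ` Nr) $ k = (\<Sum>x\<in>w ` Nr. a x * x $ k)"
        by (rule vec_space.lincomb_index[OF kd]) (use wcar in auto)
      also have "\<dots> = (\<Sum>k'\<in>Nr. a (w k') * w k' $ k)" by (rule sum.reindex[OF injw, unfolded comp_def])
      also have "\<dots> = (\<Sum>k'\<in>Nr. if k' = k then a (w k') else 0)"
        by (intro sum.cong refl) (use wk k in auto)
      also have "\<dots> = a (w k)" using k finNr by simp
      finally show "a v = 0" using lc kd k by simp
    qed
  qed
  have li2: "\<not> K.lin_dep (w ` Nr)" using li K.lindep_same[OF Wsub] by simp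
  obtain B where B: "finite B" "K.basis B" using kernel_basis_exists[OF M] by blast
  have fd: "K.Ker.fin_dim" using B unfolding K.Ker.fin_dim_def K.Ker.basis_def by blast
  have "card (w ` Nr) \<le> K.dim" by (rule K.Ker.li_le_dim(2)[OF fd Wsub li2])
  then have "card Nr \<le> kernel_dim M" using card_image[OF injw] by simp
  then show ?thesis using cardR cardRN by linarith
qed


lemma mtrace_mult_comm:
  fixes X Y :: "complex mat"
  assumes X: "X \<in> carrier_mat n k" and Y: "Y \<in> carrier_mat k n"
  shows "mtrace (X * Y) = mtrace (Y * X)"
proof -
  have "mtrace (X*Y) = (\<Sum>i<n. \<Sum>j<k. X $$ (i,j) * Y $$ (j,i))"
    unfolding mtrace_def using X Y by (simp add: scalar_prod_def atLeast0LessThan)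
  also have "\<dots> = (\<Sum>j<k. \<Sum>i<n. Y $$ (j,i) * X $$ (i,j))" by (subst sum.swap) (simp add: mult.commute)
  also have "\<dots> = mtrace (Y*X)" unfolding mtrace_def using X Y by (simp add: scalar_prod_def atLeast0LessThan)
  finally show ?thesis .
qed

lemma mtrace_similar:
  fixes A B :: "complex mat"
  assumes A: "A \<in> carrier_mat n n" and S: "similar_mat_wit A B P Q"
  shows "mtrace A = mtrace B"
proof -
  note W = similar_mat_witD2[OF A S]
  have "mtrace A = mtrace ((P * B) * Q)" using W(3) by simp
  also have "\<dots> = mtrace (Q * (P * B))" by (rule mtrace_mult_comm) (use W in auto)
  also have "Q * (P * B) = (Q * P) * B" by (rule assoc_mult_mat[symmetric]) (use W in auto)
  also have "\<dots> = B" using W by simp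
  finally show ?thesis .
qed

lemma mtrace_diag: "mtrace B = sum_list (diag_mat B)"
  unfolding mtrace_def diag_mat_def by (simp add: sum_list_sum_nth atLeast0LessThan)

lemma order_prod_linear: "order e (\<Prod>a\<leftarrow>as. [:-a,1:]) = count_list as e"
proof (induct as)
  case Nil
  show ?case by (simp add: order_0I)
next
  case (Cons x xs)
  have nz: "(\<Prod>a\<leftarrow>xs. [:-a,1:]) \<noteq> (0 :: 'a poly)" by (auto simp add: prod_list_zero_iff)
  have eq: "(\<Prod>a\<leftarrow>x#xs. [:-a,1:]) = [:-x,1:] * (\<Prod>a\<leftarrow>xs. [:-a,1:])" by simp
  have "order e ([:-x,1:] * (\<Prod>a\<leftarrow>xs. [:-a,1:])) = order e [:-x,1:] + order e (\<Prod>a\<leftarrow>xs. [:-a,1:])"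
    by (rule order_mult, rule no_zero_divisors, simp, rule nz)
  then have "order e (\<Prod>a\<leftarrow>x#xs. [:-a,1:]) = order e [:-x,1:] + order e (\<Prod>a\<leftarrow>xs. [:-a,1:])"
    unfolding eq .
  then show ?case using Cons by (simp add: order_linear')
qed

lemma order_prod_jordan: "order (0::'a::idom) (\<Prod>(n,a)\<leftarrow>n_as. [:-a,1:]^n) = sum_list (map (\<lambda>(n,a). if a = 0 then n else 0) n_as)"
proof (induct n_as)
  case Nil
  show ?case by (simp add: order_0I)
next
  case (Cons x xs)
  obtain k b where x: "x = (k,b)" by force
  have nz: "(\<Prod>(n,a)\<leftarrow>xs. [:-a,1:]^n) \<noteq> (0 :: 'a poly)" by (auto simp add: prod_list_zero_iff)
  have nz2: "[:-b,1:]^k \<noteq> (0::'a poly)" by simp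
  have "order 0 (\<Prod>(n,a)\<leftarrow>x#xs. [:-a,1:]^n) = order 0 ([:-b,1:]^k) + order 0 (\<Prod>(n,a)\<leftarrow>xs. [:-a,1:]^n)"
    using nz nz2 unfolding x by (simp add: order_mult)
  then show ?case using Cons unfolding x by (simp add: order_linear_power)
qed

lemma poly_prod_linear_zero: "poly (\<Prod>a\<leftarrow>as. [:-a,1:]) (e::'a::idom) = 0 \<longleftrightarrow> e \<in> set as"
  by (induct as) auto

lemma xlogx_bound:
  fixes p R :: real
  assumes p: "p \<ge> 0" and R: "R > 0"
  shows "- xlogx p \<le> p * ln R + (if p \<noteq> 0 then 1/R else 0) - p"
proof (cases "p = 0")
  case True then show ?thesis by (simp add: xlogx_def)
next
  case False
  then have pp: "p > 0" using p by simp
  have "ln (1 / (p * R)) \<le> 1 / (p * R) - 1" by (rule ln_le_minus_one) (use pp R in simp)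
  then have "p * ln (1 / (p * R)) \<le> p * (1 / (p * R) - 1)" using pp by (simp add: mult_left_mono)
  moreover have "ln (1 / (p * R)) = - ln p - ln R" using pp R by (simp add: ln_div ln_mult)
  moreover have "p * (1 / (p * R) - 1) = 1/R - p" using pp R by (simp add: field_simps)
  ultimately have A: "p * (- ln p - ln R) \<le> 1/R - p" by simp
  have A': "- (p * ln p) - p * ln R \<le> 1/R - p" using A by (simp add: right_diff_distrib)
  have "- xlogx p = - (p * ln p)" using pp by (simp add: xlogx_def)
  then show ?thesis using A' False by simp
qed

lemma sum_list_bound_aux:
  "sum_list (map (\<lambda>p. p * L + (if p \<noteq> 0 then 1/R else 0) - p) ps)
     = sum_list ps * L + real (length (filter (\<lambda>p. p \<noteq> 0) ps)) / R - sum_list ps"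
  by (induct ps) (auto simp: algebra_simps add_divide_distrib)

lemma entropy_list:
  fixes ps :: "real list" and R :: real
  assumes nn: "\<forall>p\<in>set ps. p \<ge> 0" and s1: "sum_list ps = 1"
    and cnt: "real (length (filter (\<lambda>p. p \<noteq> 0) ps)) \<le> R"
  shows "- sum_list (map xlogx ps) \<le> ln R"
proof -
  have "filter (\<lambda>p. p \<noteq> 0) ps \<noteq> []"
  proof
    assume "filter (\<lambda>p. p \<noteq> 0) ps = []"
    then have "\<forall>p\<in>set ps. p = 0" by (simp add: filter_empty_conv)
    then have "sum_list ps = 0" by (induct ps) auto
    with s1 show False by simp
  qed
  then have "R \<ge> 1" using cnt by (metis length_greater_0_conv less_one not_le of_nat_1 of_nat_mono order_trans)
  then have R: "R > 0" by simp
  have "- sum_list (map xlogx ps) = sum_list (map (\<lambda>p. - xlogx p) ps)" by (induct ps) auto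
  also have "\<dots> \<le> sum_list (map (\<lambda>p. p * ln R + (if p \<noteq> 0 then 1/R else 0) - p) ps)"
    by (rule sum_list_mono) (use nn xlogx_bound[OF _ R] in auto)
  also have "\<dots> = ln R + real (length (filter (\<lambda>p. p \<noteq> 0) ps)) / R - 1"
    unfolding sum_list_bound_aux s1 by simp
  also have "\<dots> \<le> ln R" using cnt R by (simp add: divide_le_eq_1)
  finally show ?thesis .
qed


lemma cnj_mult_self: "cnj z * z = complex_of_real ((cmod z)^2)"
  by (metis complex_norm_square mult.commute)

lemma eig_psd:
  fixes M :: "complex mat" and F :: "nat \<Rightarrow> nat \<Rightarrow> complex" and c :: real
  assumes M: "M \<in> carrier_mat d d" and c: "c \<ge> 0"
    and ent: "\<And>k k'. k < d \<Longrightarrow> k' < d \<Longrightarrow> M $$ (k,k') = of_real c * (\<Sum>l<L. F k l * cnj (F k' l))"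
    and ev: "eigenvalue M a"
  shows "Im a = 0 \<and> Re a \<ge> 0"
proof -
  obtain v where v: "v \<in> carrier_vec d" "v \<noteq> 0\<^sub>v d" "M *\<^sub>v v = a \<cdot>\<^sub>v v"
    using ev M unfolding eigenvalue_def eigenvector_def by auto
  define w where "w l = (\<Sum>k'<d. cnj (F k' l) * v$k')" for l
  have Mv: "(M *\<^sub>v v) $ k = (\<Sum>k'<d. M $$ (k,k') * v$k')" if "k < d" for k
    using M v(1) that by (simp add: scalar_prod_def atLeast0LessThan)
  have "(\<Sum>k<d. cnj (v$k) * (M *\<^sub>v v)$k) = (\<Sum>k<d. \<Sum>k'<d. \<Sum>l<L. of_real c * ((cnj (v$k) * F k l) * (cnj (F k' l) * v$k')))"
    by (intro sum.cong refl) (simp add: Mv ent sum_distrib_left sum_distrib_right algebra_simps)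
  also have "\<dots> = (\<Sum>k<d. \<Sum>l<L. \<Sum>k'<d. of_real c * ((cnj (v$k) * F k l) * (cnj (F k' l) * v$k')))"
    by (rule sum.cong[OF refl]) (rule sum.swap)
  also have "\<dots> = (\<Sum>l<L. \<Sum>k<d. \<Sum>k'<d. of_real c * ((cnj (v$k) * F k l) * (cnj (F k' l) * v$k')))"
    by (rule sum.swap)
  also have "\<dots> = (\<Sum>l<L. of_real c * ((\<Sum>k<d. cnj (v$k) * F k l) * (\<Sum>k'<d. cnj (F k' l) * v$k')))"
    by (rule sum.cong[OF refl]) (subst sum_product, simp only: sum_distrib_left)
  also have "\<dots> = (\<Sum>l<L. of_real c * (cnj (w l) * w l))"
  proof (rule sum.cong[OF refl])
    fix l
    have cw: "cnj (w l) = (\<Sum>k<d. cnj (v$k) * F k l)" unfolding w_def by (simp add: cnj_sum mult.commute)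
    show "of_real c * ((\<Sum>k<d. cnj (v$k) * F k l) * (\<Sum>k'<d. cnj (F k' l) * v$k')) = of_real c * (cnj (w l) * w l)"
      unfolding cw unfolding w_def ..
  qed
  also have "\<dots> = of_real c * (\<Sum>l<L. cnj (w l) * w l)" by (simp add: sum_distrib_left)
  also have "\<dots> = of_real (c * (\<Sum>l<L. (cmod (w l))^2))"
    by (simp only: cnj_mult_self of_real_mult of_real_sum)
  finally have L1: "(\<Sum>k<d. cnj (v$k) * (M *\<^sub>v v)$k) = of_real (c * (\<Sum>l<L. (cmod (w l))^2))" .
  have "(\<Sum>k<d. cnj (v$k) * (M *\<^sub>v v)$k) = (\<Sum>k<d. a * (cnj (v$k) * v$k))"
    using v by (intro sum.cong refl) (simp add: algebra_simps)
  also have "\<dots> = a * of_real (\<Sum>k<d. (cmod (v$k))^2)"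
    by (simp only: cnj_mult_self of_real_sum sum_distrib_left)
  finally have L2: "(\<Sum>k<d. cnj (v$k) * (M *\<^sub>v v)$k) = a * of_real (\<Sum>k<d. (cmod (v$k))^2)" .
  obtain k0 where k0: "k0 < d" "v$k0 \<noteq> 0"
  proof -
    have "\<exists>k<d. v$k \<noteq> 0"
    proof (rule ccontr)
      assume "\<not> (\<exists>k<d. v$k \<noteq> 0)"
      then have "v = 0\<^sub>v d" using v(1) by (intro eq_vecI) auto
      with v(2) show False by simp
    qed
    then show ?thesis using that by blast
  qed
  define P where "P = (\<Sum>k<d. (cmod (v$k))^2)"
  define Q where "Q = c * (\<Sum>l<L. (cmod (w l))^2)"
  have P: "P > 0" unfolding P_def
    by (rule sum_pos2[of _ k0]) (use k0 in auto)
  have Q: "Q \<ge> 0" unfolding Q_def using c by (simp add: sum_nonneg)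
  have "a * of_real P = of_real Q" using L1 L2 unfolding P_def Q_def by simp
  then have "a = of_real (Q / P)" using P by (simp add: field_simps)
  then show ?thesis using P Q by simp
qed


lemma sum_list_count_real:
  fixes f :: "'a \<Rightarrow> real"
  assumes "set xs \<subseteq> X" "finite X"
  shows "sum_list (map f xs) = (\<Sum>x\<in>X. real (count_list xs x) * f x)"
  using assms
proof (induct xs)
  case Nil then show ?case by simp
next
  case (Cons y ys)
  have "(\<Sum>x\<in>X. real (count_list (y#ys) x) * f x) = (\<Sum>x\<in>X. (if y = x then f x else 0) + real (count_list ys x) * f x)"
    by (intro sum.cong refl) (auto simp: algebra_simps)
  also have "\<dots> = f y + (\<Sum>x\<in>X. real (count_list ys x) * f x)"
    using Cons.prems by (simp add: sum.distrib sum.delta)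
  finally show ?case using Cons by simp
qed

lemma length_filter_count: "length (filter (\<lambda>a. a \<noteq> z) xs) + count_list xs z = length xs"
  by (induct xs) auto

lemma length_filter_Re: "length (filter (\<lambda>p. p \<noteq> 0) (map Re as)) \<le> length (filter (\<lambda>a. a \<noteq> 0) as)"
  by (induct as) auto

lemma Re_sum_list: "Re (sum_list as) = sum_list (map Re as)"
  by (induct as) auto

lemma gen_eig_le:
  fixes n_as :: "(nat \<times> 'a::zero) list"
  shows "(\<Sum>n\<leftarrow>map fst [(n, e)\<leftarrow>n_as . e = 0]. min 1 n) \<le> sum_list (map (\<lambda>(n,a). if a = 0 then n else 0) n_as)"
  by (induct n_as) (auto intro: add_mono)

lemma char_matrix_0_pow: "A \<in> carrier_mat d d \<Longrightarrow> char_matrix A 0 ^\<^sub>m 1 = (A :: complex mat)"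
  unfolding char_matrix_def by (intro eq_matI) auto

lemma entropy_bound_general:
  fixes \<rho> :: "complex mat" and F :: "nat \<Rightarrow> nat \<Rightarrow> complex" and c :: real and R :: nat
  assumes C: "\<rho> \<in> carrier_mat d d" and c: "c \<ge> 0"
    and ent: "\<And>k k'. k < d \<Longrightarrow> k' < d \<Longrightarrow> \<rho> $$ (k,k') = of_real c * (\<Sum>l<L. F k l * cnj (F k' l))"
    and tr: "mtrace \<rho> = 1"
    and ker: "d - R \<le> kernel_dim \<rho>"
  shows "vn_entropy \<rho> \<le> ln (real R)"
proof -
  obtain as where cp: "char_poly \<rho> = (\<Prod>a\<leftarrow>as. [:-a,1:])" and len: "length as = d"
    using char_poly_factorized[OF C] by blast
  have eigs: "{e. eigenvalue \<rho> e} = set as"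
    using eigenvalue_root_char_poly[OF C] cp poly_prod_linear_zero by auto
  have ord: "order e (char_poly \<rho>) = count_list as e" for e
    unfolding cp by (rule order_prod_linear)
  have vn: "vn_entropy \<rho> = - sum_list (map xlogx (map Re as))"
    unfolding vn_entropy_def eigs ord using sum_list_count_real[of as "set as" "\<lambda>a. xlogx (Re a)"]
    by (simp add: comp_def)
  obtain B P Q where sd: "schur_decomposition \<rho> as = (B,P,Q)" by (cases "schur_decomposition \<rho> as") auto
  from schur_decomposition[OF C cp sd]
  have S: "similar_mat_wit \<rho> B P Q" and dg: "diag_mat B = as" by auto
  have "sum_list as = 1" using mtrace_similar[OF C S] mtrace_diag[of B] dg tr by simp
  then have s1: "sum_list (map Re as) = 1" using Re_sum_list[of as] by simp
  have pos: "Im a = 0 \<and> Re a \<ge> 0" if "a \<in> set as" for a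
    by (rule eig_psd[OF C c ent]) (use that eigs in auto)
  obtain n_as where jnf: "jordan_nf \<rho> n_as" using jordan_nf_exists[OF C cp] by blast
  have "dim_gen_eigenspace \<rho> 0 1 \<le> count_list as 0"
    unfolding dim_gen_eigenspace[OF jnf] ord[symmetric] jordan_nf_char_poly[OF jnf] order_prod_jordan
    by (rule gen_eig_le)
  moreover have "dim_gen_eigenspace \<rho> 0 1 = kernel_dim \<rho>"
    unfolding dim_gen_eigenspace_def char_matrix_0_pow[OF C] ..
  ultimately have cnt0: "d - R \<le> count_list as 0" using ker by simp
  have "length (filter (\<lambda>p. p \<noteq> 0) (map Re as)) \<le> R"
    using length_filter_Re[of as] length_filter_count[of 0 as] len cnt0 by linarith
  then have cnt: "real (length (filter (\<lambda>p. p \<noteq> 0) (map Re as))) \<le> real R" by simp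
  have "- sum_list (map xlogx (map Re as)) \<le> ln (real R)"
    by (rule entropy_list[OF _ s1 cnt]) (use pos in auto)
  then show ?thesis unfolding vn .
qed


lemma rho_col_eq:
  assumes n: "n = 2*h" and k: "k1 < 2^h" "k2 < 2^h"
    and g: "map (\<lambda>i. sK h (A i) k1) [0..<m] = map (\<lambda>i. sK h (A i) k2) [0..<m]"
  shows "col (rhoA m n A \<theta>) k1 = col (rhoA m n A \<theta>) k2"
proof -
  have hh: "n div 2 = h" using n by simp
  have eqi: "sK h (A i) k1 = sK h (A i) k2" if "i < m" for i
    using g that by (metis (no_types, lifting) map_eq_conv atLeastLessThan_iff set_upt zero_le)
  have D: "Dentry m n A \<theta> k1 l = Dentry m n A \<theta> k2 l" for l
    unfolding Dentry_cis[OF n] phase_def using eqi by simp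
  have C: "rhoA m n A \<theta> \<in> carrier_mat (2^h) (2^h)" using rho_carrier[of m n A \<theta>] hh by simp
  show ?thesis
  proof (rule eq_vecI)
    show "dim_vec (col (rhoA m n A \<theta>) k1) = dim_vec (col (rhoA m n A \<theta>) k2)" by simp
    fix i assume "i < dim_vec (col (rhoA m n A \<theta>) k2)"
    then have i: "i < 2^h" using C by simp
    have "col (rhoA m n A \<theta>) k1 $ i = rhoA m n A \<theta> $$ (i, k1)" using i C k by simp
    also have "\<dots> = rhoA m n A \<theta> $$ (i, k2)" using rho_entry[of i n k1] rho_entry[of i n k2] i k hh D by simp
    also have "\<dots> = col (rhoA m n A \<theta>) k2 $ i" using i C k by simp
    finally show "col (rhoA m n A \<theta>) k1 $ i = col (rhoA m n A \<theta>) k2 $ i" .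
  qed
qed

lemma card_sig: "card ((\<lambda>k. map (\<lambda>i. sK h (A i) k) [0..<m]) ` K) \<le> 2^m"
proof -
  have pm: "sK h r k \<in> {-1, 1}" for r k using sK_pm[of h r k] by auto
  have sub: "(\<lambda>k. map (\<lambda>i. sK h (A i) k) [0..<m]) ` K \<subseteq> {xs. set xs \<subseteq> {-1,1} \<and> length xs = m}"
    by (auto; metis sK_pm)
  have "card {xs. set xs \<subseteq> {-1::int,1} \<and> length xs = m} = 2^m"
    by (simp add: card_lists_length_eq numeral_2_eq_2)
  moreover have "finite {xs. set xs \<subseteq> {-1::int,1} \<and> length xs = m}"
    by (rule finite_lists_length_eq) simp
  ultimately show ?thesis using card_mono[OF _ sub] by simp
qed

lemma Dentry_norm: "n = 2*h \<Longrightarrow> Dentry m n A \<theta> k l * cnj (Dentry m n A \<theta> k l) = 1"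
  by (simp add: Dentry_cis cis_cnj cis_mult)

lemma rho_trace:
  assumes n: "n = 2*h"
  shows "mtrace (rhoA m n A \<theta>) = 1"
proof -
  have hh: "n div 2 = h" using n by simp
  have C: "rhoA m n A \<theta> \<in> carrier_mat (2^h) (2^h)" using rho_carrier[of m n A \<theta>] hh by simp
  have "mtrace (rhoA m n A \<theta>) = (\<Sum>k<(2::nat)^h. (1/2^n) * (\<Sum>l<(2::nat)^h. (1::complex)))"
    unfolding mtrace_def using C by (intro sum.cong) (auto simp: rho_entry hh Dentry_norm[OF n])
  also have "\<dots> = ((2::complex)^h * 2^h) / 2^n" by simp
  also have "(2::complex)^h * 2^h = 2^n" unfolding n by (simp add: power_add[symmetric] mult_2)
  finally show ?thesis by simp
qed

theorem mainTheorem7: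
  fixes n m q :: nat
  assumes "even n" and "m \<ge> 1" and "q > 4"
  shows "((\<Sum>A\<in>Amats m n. \<Sum>\<theta>\<in>Thetas q m. Re (mtrace (rhoA m n A \<theta> * rhoA m n A \<theta>)))
           / (real (card (Amats m n)) * real (card (Thetas q m)))
         \<le> 2 * 2 powr (- real n / 2) + (3 / 4) ^ m)
       \<and> (\<forall>A\<in>Amats m n. \<forall>\<theta>\<in>Thetas q m.
           vec_space.rank (2 ^ (n div 2)) (rhoA m n A \<theta>) \<le> 16 ^ m)
       \<and> (\<forall>A\<in>Amats m n. \<forall>\<theta>\<in>Thetas q m.
           vn_entropy (rhoA m n A \<theta>) \<le> real m * ln 16)"
proof (intro conjI ballI)
  show "(\<Sum>A\<in>Amats m n. \<Sum>\<theta>\<in>Thetas q m. Re (mtrace (rhoA m n A \<theta> * rhoA m n A \<theta>)))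
           / (real (card (Amats m n)) * real (card (Thetas q m)))
         \<le> 2 * 2 powr (- real n / 2) + (3 / 4) ^ m"
    by (rule part1[OF assms(1) assms(3)])
next
  define h where "h = n div 2"
  have n: "n = 2*h" unfolding h_def using assms(1) by simp
  fix A \<theta>
  define g where "g k = map (\<lambda>i. sK h (A i) k) [0..<m]" for k
  have C: "rhoA m n A \<theta> \<in> carrier_mat (2^h) (2^h)" using rho_carrier[of m n A \<theta>] unfolding h_def .
  have gcol: "\<And>k1 k2. k1 < 2^h \<Longrightarrow> k2 < 2^h \<Longrightarrow> g k1 = g k2 \<Longrightarrow> col (rhoA m n A \<theta>) k1 = col (rhoA m n A \<theta>) k2"
    unfolding g_def by (rule rho_col_eq[OF n])
  have cg: "card (g ` {..<2^h}) \<le> 2^m" unfolding g_def by (rule card_sig)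
  {
    have "vec_space.rank (2^h) (rhoA m n A \<theta>) \<le> card (g ` {..<2^h})"
      by (rule rank_le_factor[where g=g, OF C gcol])
    also have "\<dots> \<le> 2^m" by (rule cg)
    also have "(2::nat)^m \<le> 16^m" by (rule power_mono) auto
    finally show "vec_space.rank (2 ^ (n div 2)) (rhoA m n A \<theta>) \<le> 16 ^ m" unfolding h_def .
  }
  {
    have ker: "2^h - 2^m \<le> kernel_dim (rhoA m n A \<theta>)"
      using kernel_dim_ge[where g=g, OF C gcol] cg by linarith
    have "vn_entropy (rhoA m n A \<theta>) \<le> ln (real (2^m))"
    proof (rule entropy_bound_general[OF C _ _ rho_trace[OF n] ker])
      show "(0::real) \<le> 1/2^n" by simp
      fix k k' :: nat assume "k < 2^h" "k' < 2^h"
      then show "rhoA m n A \<theta> $$ (k, k') = complex_of_real (1/2^n) * (\<Sum>l<2^h. Dentry m n A \<theta> k l * cnj (Dentry m n A \<theta> k' l))"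
        using rho_entry[of k n k' m A \<theta>] unfolding h_def by simp
    qed
    also have "ln (real (2^m)) = real m * ln 2" by (simp add: ln_realpow)
    also have "\<dots> \<le> real m * ln 16" by (intro mult_left_mono) auto
    finally show "vn_entropy (rhoA m n A \<theta>) \<le> real m * ln 16" .
  }
qed


end
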